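(* Let $V_\theta$ be a real vector space of dimension $2$ and let $M\subset V_\theta\times[0,1]$ be a dichotomous item response hypersurface with associated function $f:V_\theta\to[0,1]$. Then for every $w\in V_\theta$ there exists a nonzero $v\in V_\theta$ such that $f$ is constant on the line $w+\mathbb{R}\cdot v=\{w+\lambda v:\lambda\in\mathbb{R}\}$.
   Context: A dichotomous item response hypersurface (IRHS) is a $D=\dim V_\theta$ dimensional smooth submanifold $M$ of $V_\theta\times[0,1]$ such that for any two vectors $v,w\in V_\theta$, the intersection of $(w+\mathbb{R}\cdot v)\times[0,1]$ with $M$ is the graph of a monotonic function $w+\mathbb{R}\cdot v\to[0,1]$. A function $g:w+\mathbb{R}\cdot v\to[0,1]$ is monotonic if either $g(w+\lambda v)\le g(w+\mu v)$ for all $\lambda\le\mu$, or $g(w+\lambda v)\ge g(w+\mu v)$ for all $\lambda\le\mu$. Taking $v=0$ shows $M$ is the graph of a function $f:V_\theta\to[0,1]$, the associated function. *)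

theory Defs
  imports "HOL-Analysis.Analysis"
begin

primrec Ck_on :: "nat \<Rightarrow> 'a::real_normed_vector set \<Rightarrow> ('a \<Rightarrow> 'b::real_normed_vector) \<Rightarrow> bool" where
  "Ck_on 0 S f = continuous_on S f"
| "Ck_on (Suc k) S f =
     (f differentiable_on S \<and> (\<forall>v. Ck_on k S (\<lambda>x. frechet_derivative f (at x) v)))"

definition smooth_on_open :: "'a::real_normed_vector set \<Rightarrow> ('a \<Rightarrow> 'b::real_normed_vector) \<Rightarrow> bool" where
  "smooth_on_open S f \<longleftrightarrow> open S \<and> (\<forall>k. Ck_on k S f)"

text \<open>M is a smooth embedded submanifold of V \<times> R of dimension DIM('a) = dim V:
  locally the image of a smooth immersion of an open subset of R^D (here 'a, which has
  dimension D) that is a homeomorphism onto its image.\<close>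
definition smooth_submanifold_dimV :: "('a::euclidean_space \<times> real) set \<Rightarrow> bool" where
  "smooth_submanifold_dimV M \<longleftrightarrow>
     (\<forall>p\<in>M. \<exists>U W (\<phi>::'a \<Rightarrow> 'a \<times> real) \<psi>.
        open U \<and> p \<in> U \<and> W \<noteq> {} \<and> smooth_on_open W \<phi> \<and>
        homeomorphism W (M \<inter> U) \<phi> \<psi> \<and>
        (\<forall>x\<in>W. inj (frechet_derivative \<phi> (at x))))"

definition monotone_on_line :: "('a::real_vector \<Rightarrow> real) \<Rightarrow> 'a \<Rightarrow> 'a \<Rightarrow> bool" where
  "monotone_on_line g w v \<longleftrightarrow>
     (\<forall>s t. s \<le> t \<longrightarrow> g (w + s *\<^sub>R v) \<le> g (w + t *\<^sub>R v)) \<or>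
     (\<forall>s t. s \<le> t \<longrightarrow> g (w + s *\<^sub>R v) \<ge> g (w + t *\<^sub>R v))"

definition line :: "'a::real_vector \<Rightarrow> 'a \<Rightarrow> 'a set" where
  "line w v = {w + s *\<^sub>R v | s. True}"

definition dichotomous_IRHS :: "('a::euclidean_space \<times> real) set \<Rightarrow> bool" where
  "dichotomous_IRHS M \<longleftrightarrow>
     smooth_submanifold_dimV M \<and> M \<subseteq> UNIV \<times> {0..1} \<and>
     (\<forall>v w. \<exists>g. (\<forall>x\<in>line w v. g x \<in> {0..1}) \<and>
        M \<inter> (line w v \<times> {0..1}) = {(x, g x) | x. x \<in> line w v} \<and>
        monotone_on_line g w v)"

end

theory Submission
  imports Defs
begin

definition segP :: "('a::real_vector \<Rightarrow> real) \<Rightarrow> bool" where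
  "segP f \<longleftrightarrow> (\<forall>x y u v. u \<ge> 0 \<longrightarrow> v \<ge> 0 \<longrightarrow> u + v = 1 \<longrightarrow>
      min (f x) (f y) \<le> f (u *\<^sub>R x + v *\<^sub>R y) \<and> f (u *\<^sub>R x + v *\<^sub>R y) \<le> max (f x) (f y))"

lemma segP_neg: "segP f \<Longrightarrow> segP (\<lambda>x. - f x)"
  unfolding segP_def
proof (intro allI impI)
  fix x y :: 'a and u v :: real
  assume P: "\<forall>x y u v. u \<ge> 0 \<longrightarrow> v \<ge> 0 \<longrightarrow> u + v = 1 \<longrightarrow>
      min (f x) (f y) \<le> f (u *\<^sub>R x + v *\<^sub>R y) \<and> f (u *\<^sub>R x + v *\<^sub>R y) \<le> max (f x) (f y)"
    and uv: "u \<ge> 0" "v \<ge> 0" "u + v = 1"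
  have h: "min (f x) (f y) \<le> f (u *\<^sub>R x + v *\<^sub>R y)" "f (u *\<^sub>R x + v *\<^sub>R y) \<le> max (f x) (f y)"
    using P uv by blast+
  show "min (- f x) (- f y) \<le> - f (u *\<^sub>R x + v *\<^sub>R y) \<and> - f (u *\<^sub>R x + v *\<^sub>R y) \<le> max (- f x) (- f y)"
  proof (cases "f x \<le> f y")
    case True
    then show ?thesis using h by (simp add: min_def max_def)
  next
    case False
    then show ?thesis using h by (simp add: min_def max_def)
  qed
qed

lemma segP_convex_less:
  assumes "segP f" shows "convex {x. f x < c}"
  unfolding convex_def
proof (intro ballI allI impI)
  fix x y :: 'a and u v :: real
  assume "x \<in> {x. f x < c}" "y \<in> {x. f x < c}" and uv: "0 \<le> u" "0 \<le> v" "u + v = 1"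
  then have "f x < c" "f y < c" by simp_all
  moreover have "f (u *\<^sub>R x + v *\<^sub>R y) \<le> max (f x) (f y)"
    using assms uv unfolding segP_def by blast
  ultimately show "u *\<^sub>R x + v *\<^sub>R y \<in> {x. f x < c}" by simp
qed

lemma segP_convex_ge:
  assumes "segP f" shows "convex {x. f x \<ge> c}"
  unfolding convex_def
proof (intro ballI allI impI)
  fix x y :: 'a and u v :: real
  assume "x \<in> {x. f x \<ge> c}" "y \<in> {x. f x \<ge> c}" and uv: "0 \<le> u" "0 \<le> v" "u + v = 1"
  then have "f x \<ge> c" "f y \<ge> c" by simp_all
  moreover have "min (f x) (f y) \<le> f (u *\<^sub>R x + v *\<^sub>R y)"
    using assms uv unfolding segP_def by blast
  ultimately show "u *\<^sub>R x + v *\<^sub>R y \<in> {x. f x \<ge> c}" by simp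
qed

lemma half:
  fixes f :: "'a::euclidean_space \<Rightarrow> real"
  assumes cont: "continuous_on UNIV f" and P: "segP f"
  shows "\<exists>a b. \<forall>x. f x < c \<longleftrightarrow> a \<bullet> x < b"
proof (cases "{x. f x < c} = {} \<or> {x. f x \<ge> c} = {}")
  case True
  then show ?thesis
  proof
    assume "{x. f x < c} = {}" then show ?thesis by (intro exI[of _ 0] exI[of _ 0]) auto
  next
    assume "{x. c \<le> f x} = {}" then show ?thesis
      by (intro exI[of _ 0] exI[of _ 1]) (auto simp: not_le)
  qed
next
  case False
  have dis: "{x. f x < c} \<inter> {x. f x \<ge> c} = {}" by auto
  have ne1: "{x. f x < c} \<noteq> {}" using False by blast
  have ne2: "{x. f x \<ge> c} \<noteq> {}" using False by blast
  obtain a b where a: "a \<noteq> 0" and B: "\<forall>x\<in>{x. f x < c}. a \<bullet> x \<le> b"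
    and C: "\<forall>x\<in>{x. f x \<ge> c}. a \<bullet> x \<ge> b"
    using separating_hyperplane_sets[OF segP_convex_less[OF P] segP_convex_ge[OF P] ne1 ne2 dis]
    by blast
  have op: "open {x. f x < c}"
    using cont by (intro open_Collect_less) (auto intro: continuous_on_const)
  have "f x < c \<longleftrightarrow> a \<bullet> x < b" for x
  proof
    assume fx: "f x < c"
    show "a \<bullet> x < b"
    proof (rule ccontr)
      assume "\<not> a \<bullet> x < b"
      moreover have "a \<bullet> x \<le> b" using B fx by simp
      ultimately have eq: "a \<bullet> x = b" by linarith
      obtain e where e: "e > 0" "ball x e \<subseteq> {x. f x < c}"
        using open_contains_ball[THEN iffD1, OF op] fx by blast
      define z where "z = x + (e / 2 / norm a) *\<^sub>R a"
      have na: "norm a > 0" using a by simp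
      have "dist x z = e / 2" unfolding z_def dist_norm using na e by (simp add: abs_of_pos)
      then have "z \<in> ball x e" using e by simp
      then have le: "a \<bullet> z \<le> b" using e B by auto
      have aa: "a \<bullet> a = norm a * norm a" by (metis power2_norm_eq_inner power2_eq_square)
      have "a \<bullet> z = a \<bullet> x + (e / 2 / norm a) * (a \<bullet> a)" unfolding z_def by (simp add: inner_add_right)
      also have "\<dots> = b + e / 2 * norm a" using na eq aa by simp
      finally have eqz: "a \<bullet> z = b + e / 2 * norm a" .
      have "e / 2 * norm a > 0" using na e by simp
      with le eqz show False by linarith
    qed
  next
    assume ax: "a \<bullet> x < b"
    show "f x < c"
    proof (rule ccontr)
      assume "\<not> f x < c" then have "c \<le> f x" by simp
      then have "b \<le> a \<bullet> x" using C by simp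
      with ax show False by simp
    qed
  qed
  then show ?thesis by blast
qed

lemma cont_f:
  fixes M :: "('a::euclidean_space \<times> real) set" and f :: "'a \<Rightarrow> real"
  assumes "smooth_submanifold_dimV M" and Mf: "M = {(x, f x) | x. True}"
  shows "continuous_on UNIV f"
proof -
  have "isCont f x" for x
  proof -
    have "(x, f x) \<in> M" using Mf by auto
    then obtain U W and \<phi> :: "'a \<Rightarrow> 'a \<times> real" and \<psi> where
      U: "open U" "(x, f x) \<in> U" and sm: "smooth_on_open W \<phi>" and hom: "homeomorphism W (M \<inter> U) \<phi> \<psi>"
      using assms(1)[unfolded smooth_submanifold_dimV_def, rule_format, OF \<open>(x, f x) \<in> M\<close>] by blast
    have oW: "open W" using sm unfolding smooth_on_open_def by blast
    have img: "\<phi> ` W = M \<inter> U" and cphi: "continuous_on W \<phi>"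
      and inv1: "\<And>z. z \<in> W \<Longrightarrow> \<psi> (\<phi> z) = z" and inv2: "\<And>p. p \<in> M \<inter> U \<Longrightarrow> \<phi> (\<psi> p) = p"
      and psiim: "\<psi> ` (M \<inter> U) = W"
      using hom unfolding homeomorphism_def by auto
    have phiM: "\<phi> z = (fst (\<phi> z), f (fst (\<phi> z)))" if zW: "z \<in> W" for z
    proof -
      have "\<phi> z \<in> M" using img zW by blast
      then obtain x0 where "\<phi> z = (x0, f x0)" using Mf by blast
      then show ?thesis by simp
    qed
    define h where "h = fst \<circ> \<phi>"
    have ch: "continuous_on W h" unfolding h_def using cphi by (intro continuous_on_compose continuous_intros) auto
    have inj: "inj_on h W"
    proof (rule inj_onI)
      fix z1 z2 assume z: "z1 \<in> W" "z2 \<in> W" "h z1 = h z2"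
      then have "\<phi> z1 = \<phi> z2" using phiM[of z1] phiM[of z2] unfolding h_def by (metis comp_apply)
      then show "z1 = z2" using inv1 z by metis
    qed
    obtain g where hg: "homeomorphism W (h ` W) h g"
      using invariance_of_domain_homeomorphism[OF oW ch _ inj] by auto
    have oh: "open (h ` W)" using invariance_of_domain[OF ch oW inj] .
    have xin: "x \<in> h ` W"
    proof -
      have "\<psi> (x, f x) \<in> W" using psiim U \<open>(x, f x) \<in> M\<close> by auto
      moreover have "h (\<psi> (x, f x)) = x" unfolding h_def using inv2 U \<open>(x, f x) \<in> M\<close> by auto
      ultimately show ?thesis by force
    qed
    have eqf: "f y = snd (\<phi> (g y))" if "y \<in> h ` W" for y
    proof -
      have "g y \<in> W" "h (g y) = y" using hg that unfolding homeomorphism_def by auto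
      then show ?thesis using phiM[of "g y"] unfolding h_def by (metis comp_apply snd_conv)
    qed
    have "continuous_on (h ` W) (\<lambda>y. snd (\<phi> (g y)))"
    proof -
      have cg: "continuous_on (h ` W) g" and gim: "g ` (h ` W) = W" using hg unfolding homeomorphism_def by auto
      show ?thesis
        by (rule continuous_on_compose2[of W "\<lambda>z. snd (\<phi> z)"]) (use cg gim cphi in \<open>auto intro: continuous_intros\<close>)
    qed
    then have "continuous_on (h ` W) f" using eqf by (metis continuous_on_cong)
    then have "\<forall>y\<in>h ` W. isCont f y" using oh by (simp only: continuous_on_eq_continuous_at)
    then show "isCont f x" using xin by blast
  qed
  then show ?thesis by (simp add: continuous_at_imp_continuous_on)
qed

lemma irhs_sub: "dichotomous_IRHS M \<Longrightarrow> M \<subseteq> UNIV \<times> {0..1}"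
  unfolding dichotomous_IRHS_def by (elim conjE)

lemma irhs_sm: "dichotomous_IRHS M \<Longrightarrow> smooth_submanifold_dimV M"
  unfolding dichotomous_IRHS_def by (elim conjE)

lemma irhs_line: "dichotomous_IRHS M \<Longrightarrow> \<forall>v w. \<exists>g. (\<forall>x\<in>line w v. g x \<in> {0..1}) \<and>
        M \<inter> (line w v \<times> {0..1}) = {(x, g x) | x. x \<in> line w v} \<and>
        monotone_on_line g w v"
  unfolding dichotomous_IRHS_def by (elim conjE)

lemma segP_f:
  fixes M :: "('a::euclidean_space \<times> real) set" and f :: "'a \<Rightarrow> real"
  assumes "dichotomous_IRHS M" and Mf: "M = {(x, f x) | x. True}"
  shows "segP f"
  unfolding segP_def
proof (intro allI impI)
  fix x y :: 'a and u v :: real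
  assume uv: "u \<ge> 0" "v \<ge> 0" "u + v = 1"
  have sub: "M \<subseteq> UNIV \<times> {0..1}" using irhs_sub[OF assms(1)] .
  from irhs_line[OF assms(1), rule_format, of x "y - x"] obtain g where
    gg: "(\<forall>z\<in>line x (y - x). g z \<in> {0..1}) \<and> M \<inter> (line x (y - x) \<times> {0..1}) = {(z, g z) | z. z \<in> line x (y - x)} \<and>
        monotone_on_line g x (y - x)" ..
  have g: "M \<inter> (line x (y - x) \<times> {0..1}) = {(z, g z) | z. z \<in> line x (y - x)}"
    using gg by (rule conjunct1[OF conjunct2])
  have mono: "monotone_on_line g x (y - x)" using gg by (rule conjunct2[OF conjunct2])
  have gf: "g (x + s *\<^sub>R (y - x)) = f (x + s *\<^sub>R (y - x))" for s
  proof -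
    let ?z = "x + s *\<^sub>R (y - x)"
    have zl: "?z \<in> line x (y - x)" unfolding line_def by blast
    have "(?z, f ?z) \<in> M" using Mf by auto
    with sub have "(?z, f ?z) \<in> M \<inter> (line x (y - x) \<times> {0..1})" using zl by auto
    then have "(?z, f ?z) \<in> {(z, g z) | z. z \<in> line x (y - x)}" by (simp only: g)
    then obtain z' where "(?z, f ?z) = (z', g z')" by blast
    then show ?thesis by (metis prod.inject)
  qed
  have p0: "x + 0 *\<^sub>R (y - x) = x" by simp
  have p1: "x + 1 *\<^sub>R (y - x) = y" by simp
  have pv: "x + v *\<^sub>R (y - x) = u *\<^sub>R x + v *\<^sub>R y"
  proof -
    have u: "u = 1 - v" using uv by simp
    show ?thesis unfolding u by (simp add: algebra_simps)
  qed
  have v1: "0 \<le> v" "v \<le> 1" using uv by auto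
  from mono[unfolded monotone_on_line_def] show
    "min (f x) (f y) \<le> f (u *\<^sub>R x + v *\<^sub>R y) \<and> f (u *\<^sub>R x + v *\<^sub>R y) \<le> max (f x) (f y)"
  proof
    assume m: "\<forall>s t. s \<le> t \<longrightarrow> g (x + s *\<^sub>R (y - x)) \<le> g (x + t *\<^sub>R (y - x))"
    have "g (x + 0 *\<^sub>R (y - x)) \<le> g (x + v *\<^sub>R (y - x))" "g (x + v *\<^sub>R (y - x)) \<le> g (x + 1 *\<^sub>R (y - x))"
      using m v1 by blast+
    then show ?thesis using gf[of 0] gf[of 1] gf[of v] unfolding p0 p1 pv by linarith
  next
    assume m: "\<forall>s t. s \<le> t \<longrightarrow> g (x + s *\<^sub>R (y - x)) \<ge> g (x + t *\<^sub>R (y - x))"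
    have "g (x + 0 *\<^sub>R (y - x)) \<ge> g (x + v *\<^sub>R (y - x))" "g (x + v *\<^sub>R (y - x)) \<ge> g (x + 1 *\<^sub>R (y - x))"
      using m v1 by blast+
    then show ?thesis using gf[of 0] gf[of 1] gf[of v] unfolding p0 p1 pv by linarith
  qed
qed

theorem lemma2:
  fixes M :: "('a::euclidean_space \<times> real) set" and f :: "'a \<Rightarrow> real"
  assumes "DIM('a) = 2"
    and "dichotomous_IRHS M"
    and "M = {(x, f x) | x. True}"
  shows "\<forall>w. \<exists>v. v \<noteq> 0 \<and> (\<forall>t::real. f (w + t *\<^sub>R v) = f w)"
proof
  fix w
  have cont: "continuous_on UNIV f"
    using cont_f[OF irhs_sm[OF assms(2)] assms(3)] .
  have P: "segP f" using segP_f[OF assms(2,3)] .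
  define c where "c = f w"
  obtain a b where ab: "\<And>x. f x < c \<longleftrightarrow> a \<bullet> x < b" using half[OF cont P] by blast
  have cont': "continuous_on UNIV (\<lambda>x. - f x)" using continuous_on_minus[OF cont] .
  have "\<exists>a b. \<forall>x. (- f x < - c) \<longleftrightarrow> a \<bullet> x < b"
    by (rule half[OF cont' segP_neg[OF P]])
  then obtain a' b' where ab0: "\<And>x. (- f x < - c) \<longleftrightarrow> a' \<bullet> x < b'" by blast
  have ab': "\<And>x. f x > c \<longleftrightarrow> a' \<bullet> x < b'" using ab0 neg_less_iff_less by metis
  have d2: "2 \<le> DIM('a)" using assms(1) by simp
  have fin: "f (w + t *\<^sub>R v) = f w" if "a \<bullet> v = 0" "a' \<bullet> v = 0" for v t
  proof -
    have "f (w + t *\<^sub>R v) < c \<longleftrightarrow> f w < c" using ab[of w] ab[of "w + t *\<^sub>R v"] that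
      by (simp add: inner_add_right)
    moreover have "f (w + t *\<^sub>R v) > c \<longleftrightarrow> f w > c" using ab'[of w] ab'[of "w + t *\<^sub>R v"] that
      by (simp add: inner_add_right)
    ultimately show ?thesis unfolding c_def by auto
  qed
  show "\<exists>v. v \<noteq> 0 \<and> (\<forall>t::real. f (w + t *\<^sub>R v) = f w)"
  proof (cases "a = 0")
    case True
    obtain v where v: "v \<noteq> 0" "orthogonal a' v" using orthogonal_to_vector_exists[OF d2] by blast
    have "a' \<bullet> v = 0" using v(2) by (simp add: orthogonal_def)
    moreover have "a \<bullet> v = 0" using True by simp
    ultimately have "\<forall>t. f (w + t *\<^sub>R v) = f w" using fin by blast
    then show ?thesis using v(1) by blast
  next
    case False
    obtain v where v: "v \<noteq> 0" "orthogonal a v" using orthogonal_to_vector_exists[OF d2] by blast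
    have av: "a \<bullet> v = 0" using v by (simp add: orthogonal_def)
    have "a' \<bullet> v = 0"
    proof (rule ccontr)
      assume nz: "a' \<bullet> v \<noteq> 0"
      have na: "a \<bullet> a > 0" using False by simp
      define s where "s = (\<bar>a \<bullet> w - b\<bar> + 1) / (a \<bullet> a)"
      define t where "t = (b' - 1 - a' \<bullet> w + s * (a' \<bullet> a)) / (a' \<bullet> v)"
      define z where "z = w - s *\<^sub>R a + t *\<^sub>R v"
      have "a \<bullet> z = a \<bullet> w - s * (a \<bullet> a)" unfolding z_def using av
        by (simp add: inner_add_right inner_diff_right)
      also have "\<dots> = a \<bullet> w - (\<bar>a \<bullet> w - b\<bar> + 1)" unfolding s_def using na by simp
      finally have "a \<bullet> z < b" by linarith
      moreover have "a' \<bullet> z = a' \<bullet> w - s * (a' \<bullet> a) + t * (a' \<bullet> v)" unfolding z_def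
        by (simp add: inner_add_right inner_diff_right inner_commute)
      then have "a' \<bullet> z = b' - 1" unfolding t_def using nz by simp
      ultimately show False using ab[of z] ab'[of z] by auto
    qed
    then have "\<forall>t. f (w + t *\<^sub>R v) = f w" using fin av by blast
    then show ?thesis using v(1) by blast
  qed
qed

end
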